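(* In the commutative toric non-degenerate setting described in the context, the automorphism group of $\bar\Gamma$ lifts via the gauging action to automorphisms of the torus: for every automorphism $\phi$ of $\bar\Gamma$ there is a unique $*$-automorphism $\psi_\phi$ of $C(T^n)$ with $\psi_\phi(wt(f))=wt'_\phi(\phi(f))$ for all oriented edges $f$; it is of the form $\psi_\phi(F)=F\circ h_\phi$ for a homeomorphism $h_\phi$ of $T^n$, and $\phi\mapsto\psi_\phi$ is a group homomorphism from $\mathrm{Aut}(\bar\Gamma)$ to the group of $*$-automorphisms of $C(T^n)$. Moreover, if $t\in T^n$ satisfies $h_\phi(t)=t$, then the re-gauging is an enhanced symmetry of the corresponding Hamiltonian: the matrix $M_\phi(t)$ commutes with $H_{\boldsymbol\tau}(t)$.
   Context: $\bar\Gamma$ is a finite connected graph (multiple edges and loops allowed) with $k$ vertices and $n=|E(\bar\Gamma)|-k+1$ independent cycles; $\bar f$ is the reverse of an oriented edge $f$. An automorphism of $\bar\Gamma$ is a pair of bijections of vertices and edges preserving incidence; it acts on oriented edges. Fix an ordered rooted spanning tree $\boldsymbol\tau=(\tau,r,<)$: a spanning tree $\tau$, root $r$, and vertex order $u_1<\dots<u_k$ with $u_1=r$. For a spanning tree $\sigma$ and vertices $x,y$, $\sigma[x\to y]$ is the unique non-backtracking path in $\sigma$ from $x$ to $y$. Let $T^n=(S^1)^n$ with coordinate functions $z_1,\dots,z_n\in C(T^n)$. Choose an orientation $e_1,\dots,e_n$ of the edges not in $\tau$ and define $wt$ on oriented edges by $wt(f)=1$ if $f$ lies in $\tau$, $wt(e_j)=z_j$,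 $wt(\bar e_j)=\bar z_j$. For a walk $\gamma$ through $f_1,\dots,f_m$, $wt(\gamma)=\prod_j wt(f_j)$. The matrix Hamiltonian $H_{\boldsymbol\tau}\in M_k(C(T^n))$ has entries $(H_{\boldsymbol\tau})_{ij}=\sum_{f\text{ from }u_j\text{ to }u_i}wt(f)$; $H_{\boldsymbol\tau}(t)\in M_k(\mathbb C)$ is its evaluation at $t\in T^n$. For an automorphism $\phi$ let $\tau'=\phi(\tau)$ with root $r'=\phi(r)$ and pushed-forward order $u'_i=\phi(u_i)$. The re-gauged weight is $wt'_\phi(f):=wt(\tau'[r'\to x],\,f,\,\tau'[y\to r'])$ for $f$ from $x$ to $y$. The re-gauging matrix $M_\phi\in M_k(C(T^n))$ is defined by $M_\phi e_i=\overline{c_i}\,e_{s(i)}$, where $s(i)$ is the index with $\phi(u_{s(i)})=u_i$ and $c_i=wt(\tau[r\to r'],\,\tau'[r'\to u_i],\,\tau[u_i\to r])$; $M_\phi(t)$ is its evaluation at $t$. *)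

theory Defs
  imports "HOL-Analysis.Analysis"
begin

text \<open>A graph is given by a vertex set V, an edge set E and a map ends assigning
  to every (undirected) edge its two endpoints in a reference orientation.
  Oriented edges are pairs (e, b): (e, True) is e in its reference orientation,
  (e, False) is its reverse.\<close>

definition osrc :: "('e \<Rightarrow> 'v \<times> 'v) \<Rightarrow> 'e \<times> bool \<Rightarrow> 'v" where
  "osrc ends f = (if snd f then fst (ends (fst f)) else snd (ends (fst f)))"

definition otgt :: "('e \<Rightarrow> 'v \<times> 'v) \<Rightarrow> 'e \<times> bool \<Rightarrow> 'v" where
  "otgt ends f = (if snd f then snd (ends (fst f)) else fst (ends (fst f)))"

definition orev :: "'e \<times> bool \<Rightarrow> 'e \<times> bool" where
  "orev f = (fst f, \<not> snd f)"

definition oedges :: "'e set \<Rightarrow> ('e \<times> bool) set" where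
  "oedges E = E \<times> UNIV"

fun is_walk :: "('e \<Rightarrow> 'v \<times> 'v) \<Rightarrow> 'e set \<Rightarrow> 'v \<Rightarrow> 'v \<Rightarrow> ('e \<times> bool) list \<Rightarrow> bool" where
  "is_walk ends T x y [] \<longleftrightarrow> x = y"
| "is_walk ends T x y (f # p) \<longleftrightarrow>
     fst f \<in> T \<and> osrc ends f = x \<and> is_walk ends T (otgt ends f) y p"

definition non_backtracking :: "('e \<times> bool) list \<Rightarrow> bool" where
  "non_backtracking p \<longleftrightarrow> (\<forall>i. Suc i < length p \<longrightarrow> p ! Suc i \<noteq> orev (p ! i))"

definition finite_graph :: "'v set \<Rightarrow> 'e set \<Rightarrow> ('e \<Rightarrow> 'v \<times> 'v) \<Rightarrow> bool" where
  "finite_graph V E ends \<longleftrightarrow> finite V \<and> finite E \<and>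
     (\<forall>e\<in>E. fst (ends e) \<in> V \<and> snd (ends e) \<in> V)"

definition connected_graph :: "'v set \<Rightarrow> 'e set \<Rightarrow> ('e \<Rightarrow> 'v \<times> 'v) \<Rightarrow> bool" where
  "connected_graph V E ends \<longleftrightarrow> finite_graph V E ends \<and> V \<noteq> {} \<and>
     (\<forall>x\<in>V. \<forall>y\<in>V. \<exists>p. is_walk ends E x y p)"

definition spanning_tree :: "'v set \<Rightarrow> 'e set \<Rightarrow> ('e \<Rightarrow> 'v \<times> 'v) \<Rightarrow> 'e set \<Rightarrow> bool" where
  "spanning_tree V E ends T \<longleftrightarrow> T \<subseteq> E \<and>
     (\<forall>x\<in>V. \<forall>y\<in>V. \<exists>p. is_walk ends T x y p) \<and>
     \<not> (\<exists>x p. p \<noteq> [] \<and> is_walk ends T x x p \<and> non_backtracking p)"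

definition tree_path :: "('e \<Rightarrow> 'v \<times> 'v) \<Rightarrow> 'e set \<Rightarrow> 'v \<Rightarrow> 'v \<Rightarrow> ('e \<times> bool) list" where
  "tree_path ends T x y = (THE p. is_walk ends T x y p \<and> non_backtracking p)"

definition graph_aut ::
  "'v set \<Rightarrow> 'e set \<Rightarrow> ('e \<Rightarrow> 'v \<times> 'v) \<Rightarrow> ('v \<Rightarrow> 'v) \<times> ('e \<times> bool \<Rightarrow> 'e \<times> bool) \<Rightarrow> bool" where
  "graph_aut V E ends \<phi> \<longleftrightarrow>
     bij_betw (fst \<phi>) V V \<and> bij_betw (snd \<phi>) (oedges E) (oedges E) \<and>
     (\<forall>f\<in>oedges E. snd \<phi> (orev f) = orev (snd \<phi> f) \<and>
        osrc ends (snd \<phi> f) = fst \<phi> (osrc ends f) \<and>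
        otgt ends (snd \<phi> f) = fst \<phi> (otgt ends f))"

definition aut_comp ::
  "('v \<Rightarrow> 'v) \<times> ('e \<times> bool \<Rightarrow> 'e \<times> bool) \<Rightarrow> ('v \<Rightarrow> 'v) \<times> ('e \<times> bool \<Rightarrow> 'e \<times> bool)
   \<Rightarrow> ('v \<Rightarrow> 'v) \<times> ('e \<times> bool \<Rightarrow> 'e \<times> bool)" where
  "aut_comp \<phi>1 \<phi>2 = (fst \<phi>1 \<circ> fst \<phi>2, snd \<phi>1 \<circ> snd \<phi>2)"

definition tree_image :: "('e \<times> bool \<Rightarrow> 'e \<times> bool) \<Rightarrow> 'e set \<Rightarrow> 'e set" where
  "tree_image pe T = {fst (pe (e, True)) | e. e \<in> T}"

text \<open>T^n, with coordinates indexed by the n edges not in the tree T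
  (coordinate z_e = t e); other coordinates are fixed to 1.\<close>
definition torus :: "'e set \<Rightarrow> 'e set \<Rightarrow> ('e \<Rightarrow> complex) set" where
  "torus E T = {t. \<forall>e. (e \<in> E - T \<longrightarrow> cmod (t e) = 1) \<and> (e \<notin> E - T \<longrightarrow> t e = 1)}"

text \<open>C(S), represented by continuous functions on S that vanish outside S.\<close>
definition Cfun :: "('e \<Rightarrow> complex) set \<Rightarrow> (('e \<Rightarrow> complex) \<Rightarrow> complex) set" where
  "Cfun S = {F. continuous_on S F \<and> (\<forall>t. t \<notin> S \<longrightarrow> F t = 0)}"

definition as_el :: "('e \<Rightarrow> complex) set \<Rightarrow> (('e \<Rightarrow> complex) \<Rightarrow> complex) \<Rightarrow> ('e \<Rightarrow> complex) \<Rightarrow> complex" where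
  "as_el S g = (\<lambda>t. if t \<in> S then g t else 0)"

definition star_aut ::
  "('e \<Rightarrow> complex) set \<Rightarrow> ((('e \<Rightarrow> complex) \<Rightarrow> complex) \<Rightarrow> (('e \<Rightarrow> complex) \<Rightarrow> complex)) \<Rightarrow> bool" where
  "star_aut S \<psi> \<longleftrightarrow> bij_betw \<psi> (Cfun S) (Cfun S) \<and>
     (\<forall>F\<in>Cfun S. \<forall>G\<in>Cfun S.
        \<psi> (\<lambda>t. F t + G t) = (\<lambda>t. \<psi> F t + \<psi> G t) \<and>
        \<psi> (\<lambda>t. F t * G t) = (\<lambda>t. \<psi> F t * \<psi> G t)) \<and>
     (\<forall>c. \<forall>F\<in>Cfun S. \<psi> (\<lambda>t. c * F t) = (\<lambda>t. c * \<psi> F t)) \<and>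
     (\<forall>F\<in>Cfun S. \<psi> (\<lambda>t. cnj (F t)) = (\<lambda>t. cnj (\<psi> F t))) \<and>
     \<psi> (as_el S (\<lambda>t. 1)) = as_el S (\<lambda>t. 1)"

definition wt_edge :: "'e set \<Rightarrow> 'e \<times> bool \<Rightarrow> ('e \<Rightarrow> complex) \<Rightarrow> complex" where
  "wt_edge T f t = (if fst f \<in> T then 1 else if snd f then t (fst f) else cnj (t (fst f)))"

definition wt_walk :: "'e set \<Rightarrow> ('e \<times> bool) list \<Rightarrow> ('e \<Rightarrow> complex) \<Rightarrow> complex" where
  "wt_walk T p t = prod_list (map (\<lambda>f. wt_edge T f t) p)"

definition regauged_wt ::
  "('e \<Rightarrow> 'v \<times> 'v) \<Rightarrow> 'e set \<Rightarrow> 'v \<Rightarrow> ('v \<Rightarrow> 'v) \<times> ('e \<times> bool \<Rightarrow> 'e \<times> bool)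
    \<Rightarrow> 'e \<times> bool \<Rightarrow> ('e \<Rightarrow> complex) \<Rightarrow> complex" where
  "regauged_wt ends T r \<phi> f =
     (let T' = tree_image (snd \<phi>) T; r' = fst \<phi> r in
      wt_walk T (tree_path ends T' r' (osrc ends f) @ [f] @ tree_path ends T' (otgt ends f) r'))"

text \<open>H(t)_{ij} = sum of wt(f) over oriented edges f from u_j to u_i (indices 0-based, u_i = us!i).\<close>
definition hamiltonian ::
  "'e set \<Rightarrow> ('e \<Rightarrow> 'v \<times> 'v) \<Rightarrow> 'e set \<Rightarrow> 'v list \<Rightarrow> ('e \<Rightarrow> complex) \<Rightarrow> nat \<Rightarrow> nat \<Rightarrow> complex" where
  "hamiltonian E ends T us t i j =
     (\<Sum>f\<in>{f\<in>oedges E. osrc ends f = us ! j \<and> otgt ends f = us ! i}. wt_edge T f t)"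

text \<open>M_phi(t) e_b = conj(c_b) e_{s(b)} with phi(u_{s(b)}) = u_b, and
  c_b = wt(tau[r -> r'], tau'[r' -> u_b], tau[u_b -> r]).\<close>
definition regauge_matrix ::
  "('e \<Rightarrow> 'v \<times> 'v) \<Rightarrow> 'e set \<Rightarrow> 'v list \<Rightarrow> ('v \<Rightarrow> 'v) \<times> ('e \<times> bool \<Rightarrow> 'e \<times> bool)
    \<Rightarrow> ('e \<Rightarrow> complex) \<Rightarrow> nat \<Rightarrow> nat \<Rightarrow> complex" where
  "regauge_matrix ends T us \<phi> t a b =
     (let r = hd us; r' = fst \<phi> r; T' = tree_image (snd \<phi>) T;
          c = wt_walk T (tree_path ends T r r' @ tree_path ends T' r' (us ! b)
                           @ tree_path ends T (us ! b) r) t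
      in if fst \<phi> (us ! a) = us ! b then cnj c else 0)"

definition mat_commute :: "nat \<Rightarrow> (nat \<Rightarrow> nat \<Rightarrow> complex) \<Rightarrow> (nat \<Rightarrow> nat \<Rightarrow> complex) \<Rightarrow> bool" where
  "mat_commute k A B \<longleftrightarrow>
     (\<forall>i<k. \<forall>j<k. (\<Sum>l<k. A i l * B l j) = (\<Sum>l<k. B i l * A l j))"

end

theory Submission
  imports Defs
begin

definition rw :: "('e \<times> bool) list \<Rightarrow> ('e \<times> bool) list" where
  "rw p = rev (map orev p)"

fun nbr :: "('e \<times> bool) list \<Rightarrow> bool" where
  "nbr [] = True"
| "nbr [f] = True"
| "nbr (f # g # p) = (g \<noteq> orev f \<and> nbr (g # p))"

lemma orev_orev[simp]: "orev (orev f) = f" by (simp add: orev_def)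
lemma fst_orev[simp]: "fst (orev f) = fst f" by (simp add: orev_def)
lemma osrc_orev[simp]: "osrc ends (orev f) = otgt ends f" by (simp add: orev_def osrc_def otgt_def)
lemma otgt_orev[simp]: "otgt ends (orev f) = osrc ends f" by (simp add: orev_def osrc_def otgt_def)
lemma orev_eq_iff: "orev f = g \<longleftrightarrow> f = orev g" by (auto simp: orev_def)

lemma nb_Cons2: "non_backtracking (f#g#p) \<longleftrightarrow> g \<noteq> orev f \<and> non_backtracking (g#p)"
  unfolding non_backtracking_def
proof (intro iffI conjI allI impI)
  assume H: "\<forall>i. Suc i < length (f # g # p) \<longrightarrow> (f # g # p) ! Suc i \<noteq> orev ((f # g # p) ! i)"
  show "g \<noteq> orev f" using H[rule_format, of 0] by simp
  fix i assume "Suc i < length (g # p)"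
  then show "(g # p) ! Suc i \<noteq> orev ((g # p) ! i)" using H[rule_format, of "Suc i"] by simp
next
  fix i assume H: "g \<noteq> orev f \<and> (\<forall>i. Suc i < length (g # p) \<longrightarrow> (g # p) ! Suc i \<noteq> orev ((g # p) ! i))"
    and L: "Suc i < length (f # g # p)"
  show "(f # g # p) ! Suc i \<noteq> orev ((f # g # p) ! i)"
  proof (cases i)
    case 0 then show ?thesis using H by simp
  next
    case (Suc j) then show ?thesis using H L by simp
  qed
qed

lemma nb_eq: "non_backtracking p = nbr p"
proof (induction p rule: nbr.induct)
  case 1 then show ?case by (simp add: non_backtracking_def)
next
  case (2 f) then show ?case by (simp add: non_backtracking_def)
next
  case (3 f g p) then show ?case by (simp add: nb_Cons2)
qed

lemma nbr_Cons: "nbr (f # p) \<longleftrightarrow> nbr p \<and> (p \<noteq> [] \<longrightarrow> hd p \<noteq> orev f)"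
  by (cases p) auto

lemma nbr_append: "nbr (p @ q) \<longleftrightarrow> nbr p \<and> nbr q \<and> (p \<noteq> [] \<longrightarrow> q \<noteq> [] \<longrightarrow> hd q \<noteq> orev (last p))"
proof (induction p)
  case Nil then show ?case by simp
next
  case (Cons f p)
  show ?case
  proof (cases "p = []")
    case True then show ?thesis by (simp add: nbr_Cons)
  next
    case False then show ?thesis by (simp add: nbr_Cons Cons) blast
  qed
qed

lemma rw_Nil[simp]: "rw [] = []" by (simp add: rw_def)
lemma rw_Cons[simp]: "rw (f # p) = rw p @ [orev f]" by (simp add: rw_def)
lemma rw_append[simp]: "rw (p @ q) = rw q @ rw p" by (simp add: rw_def)
lemma rw_rw[simp]: "rw (rw p) = p" by (simp add: rw_def rev_map comp_def)
lemma rw_empty_iff[simp]: "rw p = [] \<longleftrightarrow> p = []" by (simp add: rw_def)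
lemma last_rw: "p \<noteq> [] \<Longrightarrow> last (rw p) = orev (hd p)" by (cases p) auto

lemma nbr_rw: "nbr (rw p) = nbr p"
proof (induction p)
  case Nil then show ?case by simp
next
  case (Cons f p)
  show ?case
    by (auto simp: nbr_append nbr_Cons Cons last_rw orev_eq_iff)
qed

lemma nbr_not: "\<not> nbr p \<Longrightarrow> \<exists>a f b. p = a @ [f, orev f] @ b"
proof (induction p rule: nbr.induct)
  case (3 f g p)
  show ?case
  proof (cases "g = orev f")
    case True then show ?thesis by (rule_tac x="[]" in exI) auto
  next
    case False
    with 3 obtain a h b where "g # p = a @ [h, orev h] @ b" by auto
    then show ?thesis by (rule_tac x="f # a" in exI) auto
  qed
qed auto

lemma is_walk_append: "is_walk ends T x y (p @ q) \<longleftrightarrow> (\<exists>z. is_walk ends T x z p \<and> is_walk ends T z y q)"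
  by (induction p arbitrary: x) auto

lemma is_walk_snoc: "is_walk ends T x y (p @ [f]) \<longleftrightarrow> is_walk ends T x (osrc ends f) p \<and> fst f \<in> T \<and> otgt ends f = y"
  by (auto simp: is_walk_append)

lemma is_walk_rw: "is_walk ends T x y p \<Longrightarrow> is_walk ends T y x (rw p)"
  by (induction p arbitrary: x) (auto simp: is_walk_append)

lemma is_walk_mono: "is_walk ends T x y p \<Longrightarrow> T \<subseteq> T' \<Longrightarrow> is_walk ends T' x y p"
  by (induction p arbitrary: x) auto

lemma is_walk_edges: "is_walk ends T x y p \<Longrightarrow> f \<in> set p \<Longrightarrow> fst f \<in> T"
  by (induction p arbitrary: x) auto

lemma wt_walk_Nil[simp]: "wt_walk T [] t = 1" by (simp add: wt_walk_def)
lemma wt_walk_Cons[simp]: "wt_walk T (f # p) t = wt_edge T f t * wt_walk T p t" by (simp add: wt_walk_def)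
lemma wt_walk_append[simp]: "wt_walk T (p @ q) t = wt_walk T p t * wt_walk T q t" by (simp add: wt_walk_def)

lemma wt_edge_orev: "wt_edge T (orev f) t = cnj (wt_edge T f t)"
  by (simp add: wt_edge_def orev_def)

lemma wt_walk_rw: "wt_walk T (rw p) t = cnj (wt_walk T p t)"
  by (induction p) (auto simp: wt_edge_orev)

lemma wt_edge_norm: assumes "t \<in> torus E T" shows "cmod (wt_edge T f t) = 1"
proof -
  have "cmod (t (fst f)) = 1" using assms by (cases "fst f \<in> E") (auto simp: torus_def)
  then show ?thesis by (simp add: wt_edge_def)
qed

lemma wt_walk_norm: "t \<in> torus E T \<Longrightarrow> cmod (wt_walk T p t) = 1"
  by (induction p) (auto simp: norm_mult wt_edge_norm)

lemma unit_cnj: "cmod z = 1 \<Longrightarrow> z * cnj z = 1"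
  by (metis complex_norm_square of_real_1 power_one)

lemma wt_walk_cnj: "t \<in> torus E T \<Longrightarrow> wt_walk T p t * cnj (wt_walk T p t) = 1"
  by (rule unit_cnj[OF wt_walk_norm])

lemma wt_walk_in_tree: "(\<And>f. f \<in> set p \<Longrightarrow> fst f \<in> T) \<Longrightarrow> wt_walk T p t = 1"
  by (induction p) (auto simp: wt_edge_def)

definition acyc :: "('e \<Rightarrow> 'v \<times> 'v) \<Rightarrow> 'e set \<Rightarrow> bool" where
  "acyc ends T \<longleftrightarrow> \<not> (\<exists>x p. p \<noteq> [] \<and> is_walk ends T x x p \<and> nbr p)"

lemma remove_pair:
  assumes "is_walk ends T x y (a @ [f, orev f] @ b)"
  shows "is_walk ends T x y (a @ b)"
  using assms by (auto simp: is_walk_append)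

lemma closed_wt:
  assumes "acyc ends T" "is_walk ends T x x p" "t \<in> torus E \<tau>"
  shows "wt_walk \<tau> p t = 1"
  using assms(2)
proof (induction "length p" arbitrary: p rule: less_induct)
  case less
  show ?case
  proof (cases "nbr p")
    case True
    with less assms(1) have "p = []" unfolding acyc_def by blast
    then show ?thesis by simp
  next
    case False
    then obtain a f b where p: "p = a @ [f, orev f] @ b" using nbr_not by blast
    have "wt_walk \<tau> (a @ b) t = 1"
      using less(1)[of "a @ b"] remove_pair[of ends T x x a f b] less(2) p by auto
    moreover have "wt_edge \<tau> f t * wt_edge \<tau> (orev f) t = 1"
      by (simp add: wt_edge_orev unit_cnj wt_edge_norm[OF assms(3)])
    ultimately show ?thesis unfolding p by (simp add: algebra_simps)
      (metis mult.assoc mult.commute mult_1)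
  qed
qed

lemma walk_wt_eq:
  assumes "acyc ends T" "is_walk ends T x y p" "is_walk ends T x y q" "t \<in> torus E \<tau>"
  shows "wt_walk \<tau> p t = wt_walk \<tau> q t"
proof -
  have "is_walk ends T x x (p @ rw q)" using assms(2) is_walk_rw[OF assms(3)] by (auto simp: is_walk_append)
  then have "wt_walk \<tau> (p @ rw q) t = 1" by (rule closed_wt[OF assms(1) _ assms(4)])
  then have "wt_walk \<tau> p t * cnj (wt_walk \<tau> q t) = 1" by (simp add: wt_walk_rw)
  moreover have "wt_walk \<tau> q t * cnj (wt_walk \<tau> q t) = 1" using wt_walk_cnj[OF assms(4)] .
  ultimately show ?thesis
    by (metis mult.commute mult.left_commute mult_1)
qed

lemma exists_nbr:
  "is_walk ends T x y p \<Longrightarrow> \<exists>q. is_walk ends T x y q \<and> nbr q"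
proof (induction "length p" arbitrary: p rule: less_induct)
  case less
  show ?case
  proof (cases "nbr p")
    case True then show ?thesis using less by blast
  next
    case False
    then obtain a f b where p: "p = a @ [f, orev f] @ b" using nbr_not by blast
    then show ?thesis using less(1)[of "a @ b"] remove_pair[of ends T x y a f b] less(2) by auto
  qed
qed

lemma nbr_unique:
  assumes "acyc ends T"
  shows "is_walk ends T x y p \<Longrightarrow> is_walk ends T x y q \<Longrightarrow> nbr p \<Longrightarrow> nbr q \<Longrightarrow> p = q"
proof (induction "length p + length q" arbitrary: p q y rule: less_induct)
  case less
  show ?case
  proof (cases p rule: rev_cases)
    case Nil
    show ?thesis
    proof (cases "q = []")
      case False
      with less Nil have "is_walk ends T x x q" by auto
      with False less(5) assms show ?thesis unfolding acyc_def by blast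
    qed (simp add: Nil)
  next
    case (snoc p' f)
    note sp = snoc
    show ?thesis
    proof (cases q rule: rev_cases)
      case Nil
      with less have "is_walk ends T x x p" by auto
      with sp less(4) assms show ?thesis unfolding acyc_def by blast
    next
      case (snoc q' g)
      note sq = snoc
      show ?thesis
      proof (cases "f = g")
        case True
        have w1: "is_walk ends T x (osrc ends f) p'" using less(2) sp by (simp add: is_walk_snoc)
        have w2: "is_walk ends T x (osrc ends f) q'" using less(3) sq True by (simp add: is_walk_snoc)
        have n1: "nbr p'" using less(4) sp by (simp add: nbr_append)
        have n2: "nbr q'" using less(5) sq by (simp add: nbr_append)
        have "length p' + length q' < length p + length q" using sp sq by simp
        then have "p' = q'" using less(1) w1 w2 n1 n2 by blast
        then show ?thesis using sp sq True by simp
      next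
        case False
        have "is_walk ends T x x (p @ rw q)" using less(2) is_walk_rw[OF less(3)] by (auto simp: is_walk_append)
        moreover have "nbr (p @ rw q)"
        proof -
          have "nbr (rw q)" using less(5) by (simp add: nbr_rw)
          moreover have "hd (rw q) = orev g" using sq by simp
          moreover have "last p = f" using sp by simp
          ultimately show ?thesis using less(4) False by (subst nbr_append) (auto simp: orev_eq_iff)
        qed
        ultimately show ?thesis using assms sp unfolding acyc_def by blast
      qed
    qed
  qed
qed

lemma tree_path_prop:
  assumes "acyc ends T" "is_walk ends T x y p"
  shows "is_walk ends T x y (tree_path ends T x y) \<and> nbr (tree_path ends T x y)"
proof -
  obtain q where q: "is_walk ends T x y q" "nbr q" using exists_nbr[OF assms(2)] by blast
  have "tree_path ends T x y = q"
    unfolding tree_path_def nb_eq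
    by (rule the_equality) (use q nbr_unique[OF assms(1)] in auto)
  then show ?thesis using q by simp
qed

lemma tree_path_eq:
  assumes "acyc ends T" "is_walk ends T x y q" "nbr q"
  shows "tree_path ends T x y = q"
  unfolding tree_path_def nb_eq
  by (rule the_equality) (use assms nbr_unique[OF assms(1)] in auto)

lemma tree_path_rev:
  assumes "acyc ends T" "is_walk ends T x y p"
  shows "tree_path ends T y x = rw (tree_path ends T x y)"
  using tree_path_prop[OF assms] by (intro tree_path_eq[OF assms(1)]) (auto simp: is_walk_rw nbr_rw)

lemma spanning_acyc: "spanning_tree V E ends T \<Longrightarrow> acyc ends T"
  by (simp add: spanning_tree_def acyc_def nb_eq)

lemma spanning_walk: "spanning_tree V E ends T \<Longrightarrow> x \<in> V \<Longrightarrow> y \<in> V \<Longrightarrow> \<exists>p. is_walk ends T x y p"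
  by (simp add: spanning_tree_def)

lemma tp_walk:
  assumes "spanning_tree V E ends T" "x \<in> V" "y \<in> V"
  shows "is_walk ends T x y (tree_path ends T x y)" "nbr (tree_path ends T x y)"
  using tree_path_prop[OF spanning_acyc[OF assms(1)]] spanning_walk[OF assms] by blast+

lemma tp_rev:
  assumes "spanning_tree V E ends T" "x \<in> V" "y \<in> V"
  shows "tree_path ends T y x = rw (tree_path ends T x y)"
  using tree_path_rev[OF spanning_acyc[OF assms(1)]] spanning_walk[OF assms] by blast



lemma aut_bijV: "graph_aut V E ends \<phi> \<Longrightarrow> bij_betw (fst \<phi>) V V" by (simp add: graph_aut_def)
lemma aut_bijE: "graph_aut V E ends \<phi> \<Longrightarrow> bij_betw (snd \<phi>) (oedges E) (oedges E)" by (simp add: graph_aut_def)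
lemma aut_orev: "graph_aut V E ends \<phi> \<Longrightarrow> f \<in> oedges E \<Longrightarrow> snd \<phi> (orev f) = orev (snd \<phi> f)"
  by (simp add: graph_aut_def)
lemma aut_src: "graph_aut V E ends \<phi> \<Longrightarrow> f \<in> oedges E \<Longrightarrow> osrc ends (snd \<phi> f) = fst \<phi> (osrc ends f)"
  by (simp add: graph_aut_def)
lemma aut_tgt: "graph_aut V E ends \<phi> \<Longrightarrow> f \<in> oedges E \<Longrightarrow> otgt ends (snd \<phi> f) = fst \<phi> (otgt ends f)"
  by (simp add: graph_aut_def)
lemma aut_E: "graph_aut V E ends \<phi> \<Longrightarrow> f \<in> oedges E \<Longrightarrow> snd \<phi> f \<in> oedges E"
  using aut_bijE bij_betwE by blast
lemma aut_V: "graph_aut V E ends \<phi> \<Longrightarrow> v \<in> V \<Longrightarrow> fst \<phi> v \<in> V"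
  using aut_bijV bij_betwE by blast
lemma oedges_iff: "f \<in> oedges E \<longleftrightarrow> fst f \<in> E" by (cases f) (auto simp: oedges_def)
lemma orev_oedges: "orev f \<in> oedges E \<longleftrightarrow> f \<in> oedges E" by (simp add: oedges_iff)

lemma fg_src: "finite_graph V E ends \<Longrightarrow> f \<in> oedges E \<Longrightarrow> osrc ends f \<in> V"
  by (auto simp: finite_graph_def oedges_def osrc_def)
lemma fg_tgt: "finite_graph V E ends \<Longrightarrow> f \<in> oedges E \<Longrightarrow> otgt ends f \<in> V"
  by (auto simp: finite_graph_def oedges_def otgt_def)

lemma aut_fst_True:
  assumes "graph_aut V E ends \<phi>" "g \<in> oedges E"
  shows "fst (snd \<phi> (fst g, True)) = fst (snd \<phi> g)"
proof (cases "snd g")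
  case True then have "(fst g, True) = g" by (cases g) auto
  then show ?thesis by simp
next
  case False
  then have "(fst g, True) = orev g" by (simp add: orev_def)
  then show ?thesis using aut_orev[OF assms] by simp
qed

lemma in_tree_image:
  assumes "graph_aut V E ends \<phi>" "fst g \<in> T" "T \<subseteq> E"
  shows "fst (snd \<phi> g) \<in> tree_image (snd \<phi>) T"
proof -
  have "g \<in> oedges E" using assms by (auto simp: oedges_iff)
  then have "fst (snd \<phi> g) = fst (snd \<phi> (fst g, True))" using aut_fst_True[OF assms(1)] by simp
  then show ?thesis using assms(2) unfolding tree_image_def by blast
qed

lemma tree_image_sub:
  assumes "graph_aut V E ends \<phi>" "T \<subseteq> E"
  shows "tree_image (snd \<phi>) T \<subseteq> E"
  using assms aut_E[OF assms(1)] by (auto simp: tree_image_def oedges_iff)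

lemma map_walk:
  assumes "graph_aut V E ends \<phi>" "T \<subseteq> E"
  shows "is_walk ends T x y p \<Longrightarrow>
    is_walk ends (tree_image (snd \<phi>) T) (fst \<phi> x) (fst \<phi> y) (map (snd \<phi>) p)"
proof (induction p arbitrary: x)
  case Nil then show ?case by simp
next
  case (Cons f p)
  then have f: "fst f \<in> T" "osrc ends f = x" "is_walk ends T (otgt ends f) y p" by auto
  then have fE: "f \<in> oedges E" using assms(2) by (auto simp: oedges_iff)
  show ?case using f Cons.IH[OF f(3)] in_tree_image[OF assms(1) f(1) assms(2)]
      aut_src[OF assms(1) fE] aut_tgt[OF assms(1) fE] by simp
qed

lemma map_nbr:
  assumes "graph_aut V E ends \<phi>"
  shows "set p \<subseteq> oedges E \<Longrightarrow> nbr p \<Longrightarrow> nbr (map (snd \<phi>) p)"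
proof (induction p rule: nbr.induct)
  case (3 f g p)
  have inj: "inj_on (snd \<phi>) (oedges E)" using aut_bijE[OF assms] by (rule bij_betw_imp_inj_on)
  have fg: "f \<in> oedges E" "g \<in> oedges E" using 3 by auto
  have "snd \<phi> g \<noteq> orev (snd \<phi> f)"
  proof
    assume "snd \<phi> g = orev (snd \<phi> f)"
    then have "snd \<phi> g = snd \<phi> (orev f)" using aut_orev[OF assms fg(1)] by simp
    then have "g = orev f" using inj fg orev_oedges inj_on_def by metis
    then show False using 3 by simp
  qed
  then show ?case using 3 by simp
qed auto

lemma walk_oedges: "is_walk ends T x y p \<Longrightarrow> T \<subseteq> E \<Longrightarrow> set p \<subseteq> oedges E"
  using is_walk_edges by (fastforce simp: oedges_iff)

definition ainv :: "'v set \<Rightarrow> 'e set \<Rightarrow> ('v \<Rightarrow> 'v) \<times> ('e \<times> bool \<Rightarrow> 'e \<times> bool)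
   \<Rightarrow> ('v \<Rightarrow> 'v) \<times> ('e \<times> bool \<Rightarrow> 'e \<times> bool)" where
  "ainv V E \<phi> = (inv_into V (fst \<phi>), inv_into (oedges E) (snd \<phi>))"

lemma ainv_aut:
  assumes "graph_aut V E ends \<phi>" "finite_graph V E ends"
  shows "graph_aut V E ends (ainv V E \<phi>)"
proof -
  have bV: "bij_betw (inv_into V (fst \<phi>)) V V" by (rule bij_betw_inv_into[OF aut_bijV[OF assms(1)]])
  have bE: "bij_betw (inv_into (oedges E) (snd \<phi>)) (oedges E) (oedges E)"
    by (rule bij_betw_inv_into[OF aut_bijE[OF assms(1)]])
  have injV: "inj_on (fst \<phi>) V" using aut_bijV[OF assms(1)] by (rule bij_betw_imp_inj_on)
  have injE: "inj_on (snd \<phi>) (oedges E)" using aut_bijE[OF assms(1)] by (rule bij_betw_imp_inj_on)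
  have imE: "snd \<phi> ` oedges E = oedges E" using aut_bijE[OF assms(1)] by (rule bij_betw_imp_surj_on)
  have imV: "fst \<phi> ` V = V" using aut_bijV[OF assms(1)] by (rule bij_betw_imp_surj_on)
  show ?thesis unfolding graph_aut_def ainv_def fst_conv snd_conv
  proof (intro conjI bV bE ballI)
    fix f assume f: "f \<in> oedges E"
    define g where "g = inv_into (oedges E) (snd \<phi>) f"
    have fim: "f \<in> snd \<phi> ` oedges E" using f imE by simp
    have g: "g \<in> oedges E" "snd \<phi> g = f" unfolding g_def
      by (rule inv_into_into[OF fim], rule f_inv_into_f[OF fim])
    have eq1: "snd \<phi> (orev g) = orev f" using aut_orev[OF assms(1) g(1)] g by simp
    have X1: "inv_into (oedges E) (snd \<phi>) (snd \<phi> (orev g)) = orev g"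
      by (rule inv_into_f_f[OF injE]) (simp add: orev_oedges g(1))
    show "inv_into (oedges E) (snd \<phi>) (orev f) = orev (inv_into (oedges E) (snd \<phi>) f)"
      unfolding g_def[symmetric] using X1[unfolded eq1] .
    have eq2: "fst \<phi> (osrc ends g) = osrc ends f" using aut_src[OF assms(1) g(1)] g by simp
    have X2: "inv_into V (fst \<phi>) (fst \<phi> (osrc ends g)) = osrc ends g"
      by (rule inv_into_f_f[OF injV fg_src[OF assms(2) g(1)]])
    show "osrc ends (inv_into (oedges E) (snd \<phi>) f) = inv_into V (fst \<phi>) (osrc ends f)"
      unfolding g_def[symmetric] using X2[unfolded eq2] by simp
    have eq3: "fst \<phi> (otgt ends g) = otgt ends f" using aut_tgt[OF assms(1) g(1)] g by simp
    have X3: "inv_into V (fst \<phi>) (fst \<phi> (otgt ends g)) = otgt ends g"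
      by (rule inv_into_f_f[OF injV fg_tgt[OF assms(2) g(1)]])
    show "otgt ends (inv_into (oedges E) (snd \<phi>) f) = inv_into V (fst \<phi>) (otgt ends f)"
      unfolding g_def[symmetric] using X3[unfolded eq3] by simp
  qed
qed

lemma comp_aut:
  assumes "graph_aut V E ends \<phi>1" "graph_aut V E ends \<phi>2"
  shows "graph_aut V E ends (aut_comp \<phi>1 \<phi>2)"
  unfolding graph_aut_def aut_comp_def fst_conv snd_conv
proof (intro conjI ballI)
  show "bij_betw (fst \<phi>1 \<circ> fst \<phi>2) V V" using aut_bijV assms bij_betw_trans by blast
  show "bij_betw (snd \<phi>1 \<circ> snd \<phi>2) (oedges E) (oedges E)" using aut_bijE assms bij_betw_trans by blast
  fix f assume f: "f \<in> oedges E"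
  have g: "snd \<phi>2 f \<in> oedges E" using aut_E[OF assms(2) f] .
  show "(snd \<phi>1 \<circ> snd \<phi>2) (orev f) = orev ((snd \<phi>1 \<circ> snd \<phi>2) f)"
    using aut_orev[OF assms(2) f] aut_orev[OF assms(1) g] by simp
  show "osrc ends ((snd \<phi>1 \<circ> snd \<phi>2) f) = (fst \<phi>1 \<circ> fst \<phi>2) (osrc ends f)"
    using aut_src[OF assms(2) f] aut_src[OF assms(1) g] by simp
  show "otgt ends ((snd \<phi>1 \<circ> snd \<phi>2) f) = (fst \<phi>1 \<circ> fst \<phi>2) (otgt ends f)"
    using aut_tgt[OF assms(2) f] aut_tgt[OF assms(1) g] by simp
qed

lemma tree_image_eq: "tree_image pe T = (\<lambda>e. fst (pe (e, True))) ` T"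
  by (auto simp: tree_image_def)

lemma tree_image_comp:
  assumes "graph_aut V E ends \<phi>1" "graph_aut V E ends \<phi>2" "T \<subseteq> E"
  shows "tree_image (snd \<phi>1) (tree_image (snd \<phi>2) T) = tree_image (snd \<phi>1 \<circ> snd \<phi>2) T"
proof -
  have "fst (snd \<phi>1 (fst (snd \<phi>2 (e, True)), True)) = fst (snd \<phi>1 (snd \<phi>2 (e, True)))" if "e \<in> T" for e
    using aut_fst_True[OF assms(1) aut_E[OF assms(2)]] that assms(3) by (auto simp: oedges_iff)
  then show ?thesis unfolding tree_image_eq image_image by (intro image_cong) auto
qed

lemma tree_image_id:
  assumes "\<And>g. g \<in> oedges E \<Longrightarrow> pe g = g" "T \<subseteq> E"
  shows "tree_image pe T = T"
proof -
  have "fst (pe (e, True)) = e" if "e \<in> T" for e using assms that by (auto simp: oedges_iff)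
  then show ?thesis unfolding tree_image_eq by simp
qed

lemma tree_image_inv:
  assumes "graph_aut V E ends \<phi>" "finite_graph V E ends" "T \<subseteq> E"
  shows "tree_image (snd (ainv V E \<phi>)) (tree_image (snd \<phi>) T) = T"
proof -
  have injE: "inj_on (snd \<phi>) (oedges E)" using aut_bijE[OF assms(1)] by (rule bij_betw_imp_inj_on)
  have "tree_image (snd (ainv V E \<phi>)) (tree_image (snd \<phi>) T) = tree_image (snd (ainv V E \<phi>) \<circ> snd \<phi>) T"
    by (rule tree_image_comp[OF ainv_aut[OF assms(1,2)] assms(1,3)])
  also have "\<dots> = T"
    by (rule tree_image_id[OF _ assms(3)]) (simp add: ainv_def inv_into_f_f[OF injE])
  finally show ?thesis .
qed

lemma spanning_image:
  assumes "graph_aut V E ends \<phi>" "finite_graph V E ends" "spanning_tree V E ends T"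
  shows "spanning_tree V E ends (tree_image (snd \<phi>) T)"
proof -
  have TE: "T \<subseteq> E" using assms(3) by (simp add: spanning_tree_def)
  have sub: "tree_image (snd \<phi>) T \<subseteq> E" using tree_image_sub[OF assms(1) TE] .
  have imV: "fst \<phi> ` V = V" using aut_bijV[OF assms(1)] by (rule bij_betw_imp_surj_on)
  have conn: "\<exists>p. is_walk ends (tree_image (snd \<phi>) T) x y p" if "x \<in> V" "y \<in> V" for x y
  proof -
    have xy: "x \<in> fst \<phi> ` V" "y \<in> fst \<phi> ` V" using imV that by auto
    obtain x0 where "x0 \<in> V" "x = fst \<phi> x0" using xy(1) by (rule imageE) auto
    moreover obtain y0 where "y0 \<in> V" "y = fst \<phi> y0" using xy(2) by (rule imageE) auto
    ultimately obtain p where "is_walk ends T x0 y0 p" using spanning_walk[OF assms(3)] by blast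
    from map_walk[OF assms(1) TE this] show ?thesis using \<open>x = fst \<phi> x0\<close> \<open>y = fst \<phi> y0\<close> by blast
  qed
  have ac: "\<not> (\<exists>x p. p \<noteq> [] \<and> is_walk ends (tree_image (snd \<phi>) T) x x p \<and> nbr p)"
  proof
    assume "\<exists>x p. p \<noteq> [] \<and> is_walk ends (tree_image (snd \<phi>) T) x x p \<and> nbr p"
    then obtain x p where p: "p \<noteq> []" "is_walk ends (tree_image (snd \<phi>) T) x x p" "nbr p" by blast
    let ?\<psi> = "ainv V E \<phi>"
    have a: "graph_aut V E ends ?\<psi>" using ainv_aut[OF assms(1,2)] .
    have "is_walk ends (tree_image (snd ?\<psi>) (tree_image (snd \<phi>) T)) (fst ?\<psi> x) (fst ?\<psi> x) (map (snd ?\<psi>) p)"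
      using map_walk[OF a sub p(2)] .
    then have w: "is_walk ends T (fst ?\<psi> x) (fst ?\<psi> x) (map (snd ?\<psi>) p)"
      using tree_image_inv[OF assms(1,2) TE] by simp
    have "nbr (map (snd ?\<psi>) p)" using map_nbr[OF a walk_oedges[OF p(2) sub] p(3)] .
    then show False using w p(1) spanning_acyc[OF assms(3)] unfolding acyc_def by blast
  qed
  show ?thesis unfolding spanning_tree_def nb_eq using sub conn ac by blast
qed

lemma tp_image:
  assumes "graph_aut V E ends \<phi>" "finite_graph V E ends" "spanning_tree V E ends T" "x \<in> V" "y \<in> V"
  shows "map (snd \<phi>) (tree_path ends T x y) = tree_path ends (tree_image (snd \<phi>) T) (fst \<phi> x) (fst \<phi> y)"
proof -
  have TE: "T \<subseteq> E" using assms(3) by (simp add: spanning_tree_def)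
  have w: "is_walk ends T x y (tree_path ends T x y)" "nbr (tree_path ends T x y)"
    using tp_walk[OF assms(3-5)] by auto
  show ?thesis
    by (rule tree_path_eq[symmetric, OF spanning_acyc[OF spanning_image[OF assms(1-3)]]
          map_walk[OF assms(1) TE w(1)] map_nbr[OF assms(1) walk_oedges[OF w(1) TE] w(2)]])
qed



lemma wt_edge_cont: "continuous_on A (wt_edge T f)"
proof -
  have c: "continuous_on A (\<lambda>t::'a \<Rightarrow> complex. t (fst f))"
    by (rule continuous_on_subset[OF continuous_on_product_coordinates subset_UNIV])
  consider "fst f \<in> T" | "fst f \<notin> T" "snd f" | "fst f \<notin> T" "\<not> snd f" by blast
  then show ?thesis
  proof cases
    case 1
    then have "wt_edge T f = (\<lambda>t. 1)" by (simp add: wt_edge_def fun_eq_iff)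
    then show ?thesis by (simp add: continuous_on_const)
  next
    case 2
    then have "wt_edge T f = (\<lambda>t. t (fst f))" by (simp add: wt_edge_def fun_eq_iff)
    then show ?thesis using c by simp
  next
    case 3
    then have "wt_edge T f = (\<lambda>t. cnj (t (fst f)))" by (simp add: wt_edge_def fun_eq_iff)
    then show ?thesis using continuous_on_cnj[OF c] by simp
  qed
qed

lemma wt_walk_cont: "continuous_on A (wt_walk T p)"
proof (induction p)
  case Nil
  have "wt_walk T [] = (\<lambda>t. 1)" by (simp add: fun_eq_iff)
  then show ?case by simp
next
  case (Cons f p)
  have "wt_walk T (f # p) = (\<lambda>t. wt_edge T f t * wt_walk T p t)" by (simp add: fun_eq_iff)
  then show ?case using continuous_on_mult[OF wt_edge_cont Cons] by simp
qed

locale setting =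
  fixes V :: "'v set" and E :: "'e set" and ends :: "'e \<Rightarrow> 'v \<times> 'v"
    and \<tau> :: "'e set" and us :: "'v list"
  assumes conn: "connected_graph V E ends"
    and st: "spanning_tree V E ends \<tau>"
    and dist: "distinct us" and setus: "set us = V"
begin

abbreviation S where "S \<equiv> torus E \<tau>"
abbreviation r where "r \<equiv> hd us"
abbreviation Tp where "Tp \<phi> \<equiv> tree_image (snd \<phi>) \<tau>"
abbreviation rg where "rg \<phi> f t \<equiv> regauged_wt ends \<tau> (hd us) \<phi> f t"

definition hm where
  "hm \<phi> t = (if t \<in> S then (\<lambda>e. if e \<in> E - \<tau> then rg \<phi> (snd \<phi> (e, True)) t else 1) else t)"

definition Ps where "Ps \<phi> F = as_el S (F \<circ> hm \<phi>)"

lemma fg: "finite_graph V E ends" using conn by (simp add: connected_graph_def)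
lemma tauE: "\<tau> \<subseteq> E" using st by (simp add: spanning_tree_def)
lemma r_V: "r \<in> V"
proof -
  have "V \<noteq> {}" using conn by (simp add: connected_graph_def)
  then have "us \<noteq> []" using setus by auto
  then show ?thesis using setus hd_in_set by blast
qed

lemma Tp_st: "graph_aut V E ends \<phi> \<Longrightarrow> spanning_tree V E ends (Tp \<phi>)"
  by (rule spanning_image[OF _ fg st])
lemma Tp_E: "graph_aut V E ends \<phi> \<Longrightarrow> Tp \<phi> \<subseteq> E"
  by (rule tree_image_sub[OF _ tauE])

lemma rg_unfold: "rg \<phi> f t = wt_walk \<tau> (tree_path ends (Tp \<phi>) (fst \<phi> r) (osrc ends f) @ [f]
    @ tree_path ends (Tp \<phi>) (otgt ends f) (fst \<phi> r)) t"
  by (simp add: regauged_wt_def Let_def)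

lemma rg_cont: "continuous_on A (rg \<phi> f)"
proof -
  have "rg \<phi> f = wt_walk \<tau> (tree_path ends (Tp \<phi>) (fst \<phi> r) (osrc ends f) @ [f]
    @ tree_path ends (Tp \<phi>) (otgt ends f) (fst \<phi> r))" by (rule ext) (rule rg_unfold)
  then show ?thesis by (simp only: wt_walk_cont)
qed

lemma rg_orev:
  assumes a: "graph_aut V E ends \<phi>" and g: "g \<in> oedges E"
  shows "rg \<phi> (orev g) t = cnj (rg \<phi> g t)"
proof -
  have rV: "fst \<phi> r \<in> V" using aut_V[OF a r_V] .
  have sV: "osrc ends g \<in> V" "otgt ends g \<in> V" using fg_src[OF fg g] fg_tgt[OF fg g] by auto
  let ?A = "tree_path ends (Tp \<phi>) (fst \<phi> r) (osrc ends g)"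
  let ?B = "tree_path ends (Tp \<phi>) (otgt ends g) (fst \<phi> r)"
  have 1: "tree_path ends (Tp \<phi>) (fst \<phi> r) (otgt ends g) = rw ?B"
    by (rule tp_rev[OF Tp_st[OF a] sV(2) rV])
  have 2: "tree_path ends (Tp \<phi>) (osrc ends g) (fst \<phi> r) = rw ?A"
    by (rule tp_rev[OF Tp_st[OF a] rV sV(1)])
  have "rg \<phi> (orev g) t = wt_walk \<tau> (tree_path ends (Tp \<phi>) (fst \<phi> r) (otgt ends g) @ [orev g]
    @ tree_path ends (Tp \<phi>) (osrc ends g) (fst \<phi> r)) t"
    by (simp only: rg_unfold osrc_orev otgt_orev)
  also have "\<dots> = wt_walk \<tau> (rw (?A @ [g] @ ?B)) t" by (simp only: 1 2 rw_append rw_Cons rw_Nil append.simps append_assoc)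
  also have "\<dots> = cnj (wt_walk \<tau> (?A @ [g] @ ?B) t)" by (rule wt_walk_rw)
  also have "\<dots> = cnj (rg \<phi> g t)" by (simp only: rg_unfold)
  finally show ?thesis .
qed

lemma rg_closed_walk:
  assumes a: "graph_aut V E ends \<phi>" and g: "g \<in> oedges E"
  shows "is_walk ends (insert (fst g) (Tp \<phi>)) (fst \<phi> r) (fst \<phi> r)
     (tree_path ends (Tp \<phi>) (fst \<phi> r) (osrc ends g) @ [g] @ tree_path ends (Tp \<phi>) (otgt ends g) (fst \<phi> r))"
proof -
  have rV: "fst \<phi> r \<in> V" using aut_V[OF a r_V] .
  have sV: "osrc ends g \<in> V" "otgt ends g \<in> V" using fg_src[OF fg g] fg_tgt[OF fg g] by auto
  have w1: "is_walk ends (Tp \<phi>) (fst \<phi> r) (osrc ends g) (tree_path ends (Tp \<phi>) (fst \<phi> r) (osrc ends g))"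
    using tp_walk[OF Tp_st[OF a] rV sV(1)] by simp
  have w2: "is_walk ends (Tp \<phi>) (otgt ends g) (fst \<phi> r) (tree_path ends (Tp \<phi>) (otgt ends g) (fst \<phi> r))"
    using tp_walk[OF Tp_st[OF a] sV(2) rV] by simp
  have s: "Tp \<phi> \<subseteq> insert (fst g) (Tp \<phi>)" by auto
  show ?thesis using is_walk_mono[OF w1 s] is_walk_mono[OF w2 s] by (auto simp: is_walk_append)
qed

lemma rg_tree:
  assumes a: "graph_aut V E ends \<phi>" and g: "g \<in> oedges E" and gT: "fst g \<in> Tp \<phi>" and t: "t \<in> S"
  shows "rg \<phi> g t = 1"
proof -
  have "insert (fst g) (Tp \<phi>) = Tp \<phi>" using gT by auto
  then have "is_walk ends (Tp \<phi>) (fst \<phi> r) (fst \<phi> r)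
     (tree_path ends (Tp \<phi>) (fst \<phi> r) (osrc ends g) @ [g] @ tree_path ends (Tp \<phi>) (otgt ends g) (fst \<phi> r))"
    using rg_closed_walk[OF a g] by simp
  from closed_wt[OF spanning_acyc[OF Tp_st[OF a]] this t] show ?thesis by (simp add: rg_unfold)
qed

lemma gen:
  assumes a: "graph_aut V E ends \<phi>" and f: "f \<in> oedges E" and t: "t \<in> S"
  shows "wt_edge \<tau> f (hm \<phi> t) = rg \<phi> (snd \<phi> f) t"
proof (cases "fst f \<in> \<tau>")
  case True
  have "fst (snd \<phi> f) \<in> Tp \<phi>" by (rule in_tree_image[OF a True tauE])
  then show ?thesis using rg_tree[OF a aut_E[OF a f] _ t] True by (simp add: wt_edge_def)
next
  case False
  have eE: "fst f \<in> E - \<tau>" using f False by (simp add: oedges_iff)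
  show ?thesis
  proof (cases "snd f")
    case True
    then have "f = (fst f, True)" by (cases f) auto
    then show ?thesis using eE t False True by (simp add: wt_edge_def hm_def)
  next
    case sF: False
    then have fe: "f = orev (fst f, True)" by (cases f) (auto simp: orev_def)
    have e1: "(fst f, True) \<in> oedges E" using eE by (simp add: oedges_iff)
    have "snd \<phi> f = snd \<phi> (orev (fst f, True))" using fe by (rule arg_cong)
    also have "\<dots> = orev (snd \<phi> (fst f, True))" by (rule aut_orev[OF a e1])
    finally have "rg \<phi> (snd \<phi> f) t = cnj (rg \<phi> (snd \<phi> (fst f, True)) t)"
      using rg_orev[OF a aut_E[OF a e1]] by simp
    then show ?thesis using eE t False sF by (simp add: wt_edge_def hm_def)
  qed
qed

lemma hm_S: assumes t: "t \<in> S" shows "hm \<phi> t \<in> S"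
proof -
  have "cmod (rg \<phi> g t) = 1" for g unfolding rg_unfold by (rule wt_walk_norm[OF t])
  then show ?thesis using t by (auto simp: hm_def torus_def)
qed

lemma hm_cont: "continuous_on S (hm \<phi>)"
proof -
  let ?F = "\<lambda>t e. if e \<in> E - \<tau> then rg \<phi> (snd \<phi> (e, True)) t else 1"
  have "continuous_on S (\<lambda>t. ?F t e)" for e
  proof (cases "e \<in> E - \<tau>")
    case True
    then show ?thesis by (simp add: rg_cont)
  next
    case False
    then have X: "(\<lambda>t. ?F t e) = (\<lambda>t. 1)" by auto
    show ?thesis by (subst X) (rule continuous_on_const)
  qed
  then have "continuous_on S ?F" by (rule continuous_on_coordinatewise_then_product)
  moreover have "continuous_on S (hm \<phi>) = continuous_on S ?F"
    by (rule continuous_on_cong) (simp_all add: hm_def)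
  ultimately show ?thesis by simp
qed

lemma push:
  assumes a: "graph_aut V E ends \<phi>" and t: "t \<in> S"
  shows "is_walk ends E x y p \<Longrightarrow> x \<in> V \<Longrightarrow> wt_walk \<tau> p (hm \<phi> t) =
    wt_walk \<tau> (tree_path ends (Tp \<phi>) (fst \<phi> r) (fst \<phi> x) @ map (snd \<phi>) p
       @ tree_path ends (Tp \<phi>) (fst \<phi> y) (fst \<phi> r)) t"
proof (induction p arbitrary: x)
  case Nil
  have xV: "fst \<phi> x \<in> V" "fst \<phi> r \<in> V" using aut_V[OF a] Nil r_V by auto
  have "is_walk ends (Tp \<phi>) (fst \<phi> r) (fst \<phi> r)
      (tree_path ends (Tp \<phi>) (fst \<phi> r) (fst \<phi> x) @ tree_path ends (Tp \<phi>) (fst \<phi> x) (fst \<phi> r))"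
    using tp_walk[OF Tp_st[OF a] xV(2) xV(1)] tp_walk[OF Tp_st[OF a] xV(1) xV(2)]
    by (auto simp: is_walk_append)
  from closed_wt[OF spanning_acyc[OF Tp_st[OF a]] this t] show ?case using Nil by simp
next
  case (Cons g p)
  let ?P = "tree_path ends (Tp \<phi>)"
  let ?r = "fst \<phi> r"
  have g: "g \<in> oedges E" "osrc ends g = x" "is_walk ends E (otgt ends g) y p"
    using Cons.prems by (auto simp: oedges_iff)
  have cV: "otgt ends g \<in> V" using fg_tgt[OF fg g(1)] .
  have IH: "wt_walk \<tau> p (hm \<phi> t) = wt_walk \<tau> (?P ?r (fst \<phi> (otgt ends g)) @ map (snd \<phi>) p
       @ ?P (fst \<phi> y) ?r) t" using Cons.IH[OF g(3) cV] .
  have e: "wt_edge \<tau> g (hm \<phi> t) = wt_walk \<tau> (?P ?r (fst \<phi> x) @ [snd \<phi> g] @ ?P (fst \<phi> (otgt ends g)) ?r) t"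
    using gen[OF a g(1) t] unfolding rg_unfold aut_src[OF a g(1)] aut_tgt[OF a g(1)] g(2) .
  have cV': "fst \<phi> (otgt ends g) \<in> V" "?r \<in> V" using aut_V[OF a] cV r_V by auto
  have "is_walk ends (Tp \<phi>) (fst \<phi> (otgt ends g)) (fst \<phi> (otgt ends g))
      (?P (fst \<phi> (otgt ends g)) ?r @ ?P ?r (fst \<phi> (otgt ends g)))"
    using tp_walk[OF Tp_st[OF a] cV'(2) cV'(1)] tp_walk[OF Tp_st[OF a] cV'(1) cV'(2)]
    by (auto simp: is_walk_append)
  from closed_wt[OF spanning_acyc[OF Tp_st[OF a]] this t]
  have c: "wt_walk \<tau> (?P (fst \<phi> (otgt ends g)) ?r) t * wt_walk \<tau> (?P ?r (fst \<phi> (otgt ends g))) t = 1"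
    by simp
  have c': "wt_walk \<tau> (?P (fst \<phi> (otgt ends g)) ?r) t * (wt_walk \<tau> (?P ?r (fst \<phi> (otgt ends g))) t * W) = W"
    for W using c by (metis mult.assoc mult_1)
  show ?case
    unfolding wt_walk_Cons e IH by (simp add: mult.assoc c')
qed

end



context setting begin

lemma cocycle:
  assumes a1: "graph_aut V E ends \<phi>1" and a2: "graph_aut V E ends \<phi>2" and t: "t \<in> S"
  shows "hm (aut_comp \<phi>1 \<phi>2) t = hm \<phi>2 (hm \<phi>1 t)"
proof (rule ext)
  fix e
  have s: "hm \<phi>1 t \<in> S" using hm_S[OF t] .
  let ?\<phi> = "aut_comp \<phi>1 \<phi>2"
  show "hm ?\<phi> t e = hm \<phi>2 (hm \<phi>1 t) e"
  proof (cases "e \<in> E - \<tau>")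
    case False
    then show ?thesis using t s by (auto simp: hm_def)
  next
    case True
    have a12: "graph_aut V E ends ?\<phi>" by (rule comp_aut[OF a1 a2])
    define g2 where "g2 = snd \<phi>2 (e, True)"
    have eE: "(e, True) \<in> oedges E" using True by (simp add: oedges_iff)
    have g2E: "g2 \<in> oedges E" unfolding g2_def by (rule aut_E[OF a2 eE])
    have sV: "osrc ends g2 \<in> V" "otgt ends g2 \<in> V" using fg_src[OF fg g2E] fg_tgt[OF fg g2E] by auto
    have r2V: "fst \<phi>2 r \<in> V" using aut_V[OF a2 r_V] .
    have r12V: "fst \<phi>1 (fst \<phi>2 r) \<in> V" using aut_V[OF a1 r2V] .
    have r1V: "fst \<phi>1 r \<in> V" using aut_V[OF a1 r_V] .
    let ?P2 = "tree_path ends (Tp \<phi>2)"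
    let ?P1 = "tree_path ends (Tp \<phi>1)"
    let ?P12 = "tree_path ends (Tp ?\<phi>)"
    define W where "W = ?P2 (fst \<phi>2 r) (osrc ends g2) @ [g2] @ ?P2 (otgt ends g2) (fst \<phi>2 r)"
    have "is_walk ends (insert (fst g2) (Tp \<phi>2)) (fst \<phi>2 r) (fst \<phi>2 r) W"
      unfolding W_def by (rule rg_closed_walk[OF a2 g2E])
    moreover have "insert (fst g2) (Tp \<phi>2) \<subseteq> E" using Tp_E[OF a2] g2E by (simp add: oedges_iff)
    ultimately have wW: "is_walk ends E (fst \<phi>2 r) (fst \<phi>2 r) W" by (rule is_walk_mono)
    have timg: "tree_image (snd \<phi>1) (Tp \<phi>2) = Tp ?\<phi>"
      using tree_image_comp[OF a1 a2 tauE] by (simp add: aut_comp_def)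
    have tpi: "map (snd \<phi>1) (?P2 x y) = ?P12 (fst \<phi>1 x) (fst \<phi>1 y)" if "x \<in> V" "y \<in> V" for x y
      using tp_image[OF a1 fg Tp_st[OF a2] that] timg by simp
    have mW: "map (snd \<phi>1) W = ?P12 (fst ?\<phi> r) (osrc ends (snd ?\<phi> (e, True))) @ [snd ?\<phi> (e, True)]
        @ ?P12 (otgt ends (snd ?\<phi> (e, True))) (fst ?\<phi> r)"
      unfolding W_def using tpi[OF r2V sV(1)] tpi[OF sV(2) r2V]
      by (simp add: aut_comp_def g2_def[symmetric] aut_src[OF a1 g2E] aut_tgt[OF a1 g2E])
    have "hm \<phi>2 (hm \<phi>1 t) e = rg \<phi>2 g2 (hm \<phi>1 t)" using True s by (simp add: hm_def g2_def)
    also have "\<dots> = wt_walk \<tau> W (hm \<phi>1 t)" by (simp only: rg_unfold W_def)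
    also have "\<dots> = wt_walk \<tau> (?P1 (fst \<phi>1 r) (fst \<phi>1 (fst \<phi>2 r)) @ map (snd \<phi>1) W
       @ ?P1 (fst \<phi>1 (fst \<phi>2 r)) (fst \<phi>1 r)) t" by (rule push[OF a1 t wW r2V])
    also have "\<dots> = wt_walk \<tau> (?P1 (fst \<phi>1 r) (fst \<phi>1 (fst \<phi>2 r))) t * rg ?\<phi> (snd ?\<phi> (e, True)) t
       * wt_walk \<tau> (?P1 (fst \<phi>1 (fst \<phi>2 r)) (fst \<phi>1 r)) t"
      unfolding mW rg_unfold by (simp add: aut_comp_def)
    also have "\<dots> = rg ?\<phi> (snd ?\<phi> (e, True)) t"
    proof -
      have "is_walk ends (Tp \<phi>1) (fst \<phi>1 r) (fst \<phi>1 r)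
         (?P1 (fst \<phi>1 r) (fst \<phi>1 (fst \<phi>2 r)) @ ?P1 (fst \<phi>1 (fst \<phi>2 r)) (fst \<phi>1 r))"
        using tp_walk[OF Tp_st[OF a1] r1V r12V] tp_walk[OF Tp_st[OF a1] r12V r1V]
        by (auto simp: is_walk_append)
      from closed_wt[OF spanning_acyc[OF Tp_st[OF a1]] this t]
      have "wt_walk \<tau> (?P1 (fst \<phi>1 r) (fst \<phi>1 (fst \<phi>2 r))) t * wt_walk \<tau> (?P1 (fst \<phi>1 (fst \<phi>2 r)) (fst \<phi>1 r)) t = 1"
        by simp
      then show ?thesis by (simp add: algebra_simps)
    qed
    also have "\<dots> = hm ?\<phi> t e" using True t by (simp add: hm_def)
    finally show ?thesis by simp
  qed
qed

lemma hm_id: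
  assumes iV: "\<forall>v\<in>V. fst \<phi> v = v" and iE: "\<forall>g\<in>oedges E. snd \<phi> g = g" and t: "t \<in> S"
  shows "hm \<phi> t = t"
proof (rule ext)
  fix e
  show "hm \<phi> t e = t e"
  proof (cases "e \<in> E - \<tau>")
    case False
    then show ?thesis using t by (auto simp: hm_def torus_def)
  next
    case True
    have eE: "(e, True) \<in> oedges E" using True by (simp add: oedges_iff)
    have Tp: "Tp \<phi> = \<tau>" by (rule tree_image_id[OF _ tauE]) (simp add: iE)
    have rr: "fst \<phi> r = r" using iV r_V by simp
    have sV: "osrc ends (e, True) \<in> V" "otgt ends (e, True) \<in> V" using fg_src[OF fg eE] fg_tgt[OF fg eE] by auto
    have w1: "wt_walk \<tau> (tree_path ends \<tau> r (osrc ends (e, True))) t = 1"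
      by (rule wt_walk_in_tree) (rule is_walk_edges[OF tp_walk(1)[OF st r_V sV(1)]])
    have w2: "wt_walk \<tau> (tree_path ends \<tau> (otgt ends (e, True)) r) t = 1"
      by (rule wt_walk_in_tree) (rule is_walk_edges[OF tp_walk(1)[OF st sV(2) r_V]])
    have "hm \<phi> t e = rg \<phi> (e, True) t" using True t iE eE by (simp add: hm_def)
    also have "\<dots> = t e" unfolding rg_unfold Tp rr using w1 w2 True by (simp add: wt_edge_def)
    finally show ?thesis .
  qed
qed

lemma hm_inv:
  assumes a: "graph_aut V E ends \<phi>" and t: "t \<in> S"
  shows "hm (ainv V E \<phi>) (hm \<phi> t) = t" "hm \<phi> (hm (ainv V E \<phi>) t) = t"
proof -
  let ?\<psi> = "ainv V E \<phi>"
  have b: "graph_aut V E ends ?\<psi>" by (rule ainv_aut[OF a fg])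
  have injV: "inj_on (fst \<phi>) V" using aut_bijV[OF a] by (rule bij_betw_imp_inj_on)
  have injE: "inj_on (snd \<phi>) (oedges E)" using aut_bijE[OF a] by (rule bij_betw_imp_inj_on)
  have imE: "snd \<phi> ` oedges E = oedges E" using aut_bijE[OF a] by (rule bij_betw_imp_surj_on)
  have imV: "fst \<phi> ` V = V" using aut_bijV[OF a] by (rule bij_betw_imp_surj_on)
  have "hm (aut_comp \<phi> ?\<psi>) t = t"
  proof (rule hm_id[OF _ _ t])
    show "\<forall>v\<in>V. fst (aut_comp \<phi> ?\<psi>) v = v"
    proof
      fix v assume "v \<in> V"
      then have "v \<in> fst \<phi> ` V" using imV by simp
      then show "fst (aut_comp \<phi> ?\<psi>) v = v" by (simp add: aut_comp_def ainv_def f_inv_into_f)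
    qed
    show "\<forall>g\<in>oedges E. snd (aut_comp \<phi> ?\<psi>) g = g"
    proof
      fix v assume "v \<in> oedges E"
      then have "v \<in> snd \<phi> ` oedges E" using imE by simp
      then show "snd (aut_comp \<phi> ?\<psi>) v = v" by (simp add: aut_comp_def ainv_def f_inv_into_f)
    qed
  qed
  then show "hm ?\<psi> (hm \<phi> t) = t" using cocycle[OF a b t] by simp
  have "hm (aut_comp ?\<psi> \<phi>) t = t"
  proof (rule hm_id[OF _ _ t])
    show "\<forall>v\<in>V. fst (aut_comp ?\<psi> \<phi>) v = v"
      using injV by (simp add: aut_comp_def ainv_def inv_into_f_f)
    show "\<forall>g\<in>oedges E. snd (aut_comp ?\<psi> \<phi>) g = g"
      using injE by (simp add: aut_comp_def ainv_def inv_into_f_f)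
  qed
  then show "hm \<phi> (hm ?\<psi> t) = t" using cocycle[OF b a t] by simp
qed

lemma homeo:
  assumes a: "graph_aut V E ends \<phi>"
  shows "homeomorphism S S (hm \<phi>) (hm (ainv V E \<phi>))"
proof (rule homeomorphismI)
  show "continuous_on S (hm \<phi>)" by (rule hm_cont)
  show "continuous_on S (hm (ainv V E \<phi>))" by (rule hm_cont)
  show "hm \<phi> ` S \<subseteq> S" using hm_S by blast
  show "hm (ainv V E \<phi>) ` S \<subseteq> S" using hm_S by blast
  show "\<And>x. x \<in> S \<Longrightarrow> hm (ainv V E \<phi>) (hm \<phi> x) = x" using hm_inv(1)[OF a] .
  show "\<And>x. x \<in> S \<Longrightarrow> hm \<phi> (hm (ainv V E \<phi>) x) = x" using hm_inv(2)[OF a] .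
qed

lemma Ps_Cfun: assumes F: "F \<in> Cfun S" shows "Ps \<phi> F \<in> Cfun S"
proof -
  have Fc: "continuous_on S F" using F by (simp add: Cfun_def)
  have "continuous_on S (F \<circ> hm \<phi>)"
  proof (rule continuous_on_compose[OF hm_cont])
    show "continuous_on (hm \<phi> ` S) F" using continuous_on_subset[OF Fc] hm_S by blast
  qed
  moreover have "continuous_on S (Ps \<phi> F) = continuous_on S (F \<circ> hm \<phi>)"
    by (rule continuous_on_cong) (simp_all add: Ps_def as_el_def)
  ultimately show ?thesis by (simp add: Cfun_def Ps_def as_el_def)
qed

lemma Cfun_zero: "F \<in> Cfun S \<Longrightarrow> t \<notin> S \<Longrightarrow> F t = 0" by (simp add: Cfun_def)

lemma Ps_inv:
  assumes a: "graph_aut V E ends \<phi>" and F: "F \<in> Cfun S"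
  shows "Ps (ainv V E \<phi>) (Ps \<phi> F) = F" "Ps \<phi> (Ps (ainv V E \<phi>) F) = F"
proof -
  show "Ps (ainv V E \<phi>) (Ps \<phi> F) = F"
  proof (rule ext)
    fix t show "Ps (ainv V E \<phi>) (Ps \<phi> F) t = F t"
      using hm_inv(2)[OF a, of t] hm_S[of t "ainv V E \<phi>"] Cfun_zero[OF F, of t]
      by (auto simp: Ps_def as_el_def)
  qed
  show "Ps \<phi> (Ps (ainv V E \<phi>) F) = F"
  proof (rule ext)
    fix t show "Ps \<phi> (Ps (ainv V E \<phi>) F) t = F t"
      using hm_inv(1)[OF a, of t] hm_S[of t \<phi>] Cfun_zero[OF F, of t]
      by (auto simp: Ps_def as_el_def)
  qed
qed

lemma Ps_star:
  assumes a: "graph_aut V E ends \<phi>"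
  shows "star_aut S (Ps \<phi>)"
  unfolding star_aut_def
proof (intro conjI ballI allI)
  show "bij_betw (Ps \<phi>) (Cfun S) (Cfun S)"
    by (rule bij_betw_byWitness[where f'="Ps (ainv V E \<phi>)"])
       (auto simp: Ps_inv[OF a] Ps_Cfun)
  fix F G
  show "Ps \<phi> (\<lambda>t. F t + G t) = (\<lambda>t. Ps \<phi> F t + Ps \<phi> G t)"
    by (simp add: Ps_def as_el_def fun_eq_iff)
  show "Ps \<phi> (\<lambda>t. F t * G t) = (\<lambda>t. Ps \<phi> F t * Ps \<phi> G t)"
    by (simp add: Ps_def as_el_def fun_eq_iff)
next
  fix c F
  show "Ps \<phi> (\<lambda>t. c * F t) = (\<lambda>t. c * Ps \<phi> F t)"
    by (simp add: Ps_def as_el_def fun_eq_iff)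
next
  fix F
  show "Ps \<phi> (\<lambda>t. cnj (F t)) = (\<lambda>t. cnj (Ps \<phi> F t))"
    by (simp add: Ps_def as_el_def fun_eq_iff)
next
  show "Ps \<phi> (as_el S (\<lambda>t. 1)) = as_el S (\<lambda>t. 1)"
    using hm_S by (auto simp: Ps_def as_el_def fun_eq_iff)
qed

lemma Ps_gen:
  assumes a: "graph_aut V E ends \<phi>" and f: "f \<in> oedges E"
  shows "Ps \<phi> (as_el S (wt_edge \<tau> f)) = as_el S (rg \<phi> (snd \<phi> f))"
  using gen[OF a f] hm_S by (auto simp: Ps_def as_el_def fun_eq_iff)

lemma Ps_comp:
  assumes a1: "graph_aut V E ends \<phi>1" and a2: "graph_aut V E ends \<phi>2"
  shows "Ps (aut_comp \<phi>1 \<phi>2) F = Ps \<phi>1 (Ps \<phi>2 F)"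
  by (auto simp: Ps_def as_el_def fun_eq_iff cocycle[OF a1 a2] hm_S)

end


lemma sa_add: "star_aut A \<psi> \<Longrightarrow> F \<in> Cfun A \<Longrightarrow> G \<in> Cfun A \<Longrightarrow> \<psi> (\<lambda>s. F s + G s) = (\<lambda>s. \<psi> F s + \<psi> G s)"
  by (simp add: star_aut_def)
lemma sa_mult: "star_aut A \<psi> \<Longrightarrow> F \<in> Cfun A \<Longrightarrow> G \<in> Cfun A \<Longrightarrow> \<psi> (\<lambda>s. F s * G s) = (\<lambda>s. \<psi> F s * \<psi> G s)"
  by (simp add: star_aut_def)
lemma sa_scale: "star_aut A \<psi> \<Longrightarrow> F \<in> Cfun A \<Longrightarrow> \<psi> (\<lambda>s. c * F s) = (\<lambda>s. c * \<psi> F s)"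
  by (simp add: star_aut_def)
lemma sa_cnj: "star_aut A \<psi> \<Longrightarrow> F \<in> Cfun A \<Longrightarrow> \<psi> (\<lambda>s. cnj (F s)) = (\<lambda>s. cnj (\<psi> F s))"
  by (simp add: star_aut_def)
lemma sa_one: "star_aut A \<psi> \<Longrightarrow> \<psi> (as_el A (\<lambda>s. 1)) = as_el A (\<lambda>s. 1)"
  by (simp add: star_aut_def)
lemma sa_Cfun: "star_aut A \<psi> \<Longrightarrow> F \<in> Cfun A \<Longrightarrow> \<psi> F \<in> Cfun A"
  unfolding star_aut_def using bij_betwE by blast

lemma Cfun_add: "F \<in> Cfun A \<Longrightarrow> G \<in> Cfun A \<Longrightarrow> (\<lambda>s. F s + G s) \<in> Cfun A"
  by (simp add: Cfun_def continuous_on_add)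
lemma Cfun_mult: "F \<in> Cfun A \<Longrightarrow> G \<in> Cfun A \<Longrightarrow> (\<lambda>s. F s * G s) \<in> Cfun A"
  by (simp add: Cfun_def continuous_on_mult)
lemma Cfun_scale: "F \<in> Cfun A \<Longrightarrow> (\<lambda>s. c * F s) \<in> Cfun A"
  by (simp add: Cfun_def continuous_on_mult continuous_on_const)
lemma Cfun_cnj: "F \<in> Cfun A \<Longrightarrow> (\<lambda>s. cnj (F s)) \<in> Cfun A"
  by (simp add: Cfun_def continuous_on_cnj)
lemma Cfun_as_el: "continuous_on A f \<Longrightarrow> as_el A f \<in> Cfun A"
proof -
  assume c: "continuous_on A f"
  have "continuous_on A (as_el A f) = continuous_on A f"
    by (rule continuous_on_cong) (simp_all add: as_el_def)
  then show ?thesis using c by (simp add: Cfun_def as_el_def)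
qed
lemma Cfun_one: "as_el A (\<lambda>s. 1) \<in> Cfun A"
  by (rule Cfun_as_el) (simp add: continuous_on_const)

lemma sa_zero: assumes "star_aut A \<psi>" shows "\<psi> (\<lambda>s. 0) = (\<lambda>s. 0)"
proof -
  have "\<psi> (\<lambda>s. 0 * as_el A (\<lambda>s. 1) s) = (\<lambda>s. 0 * \<psi> (as_el A (\<lambda>s. 1)) s)"
    by (rule sa_scale[OF assms Cfun_one])
  then show ?thesis by simp
qed

lemma sa_sum:
  assumes sa: "star_aut A \<psi>" and fin: "finite I"
  shows "(\<forall>i\<in>I. F i \<in> Cfun A) \<Longrightarrow> (\<lambda>s. \<Sum>i\<in>I. F i s) \<in> Cfun A \<and> \<psi> (\<lambda>s. \<Sum>i\<in>I. F i s) t = (\<Sum>i\<in>I. \<psi> (F i) t)"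
  using fin
proof (induction I rule: finite_induct)
  case empty
  have "(\<lambda>s. 0::complex) \<in> Cfun A" by (simp add: Cfun_def continuous_on_const)
  then show ?case using sa_zero[OF sa] by simp
next
  case (insert i I)
  then have Fi: "F i \<in> Cfun A" and IH: "(\<lambda>s. \<Sum>i\<in>I. F i s) \<in> Cfun A"
      "\<psi> (\<lambda>s. \<Sum>i\<in>I. F i s) t = (\<Sum>i\<in>I. \<psi> (F i) t)" by auto
  have "(\<lambda>s. \<Sum>i\<in>insert i I. F i s) = (\<lambda>s. F i s + (\<Sum>i\<in>I. F i s))"
    using insert by simp
  then show ?case using Cfun_add[OF Fi IH(1)] sa_add[OF sa Fi IH(1)] IH(2) insert by simp
qed

lemma char_nonzero:
  assumes sa: "star_aut A \<psi>" and t: "t \<in> A" and H: "H \<in> Cfun A" and nz: "\<forall>s\<in>A. H s \<noteq> 0"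
  shows "\<psi> H t \<noteq> 0"
proof -
  define K where "K = as_el A (\<lambda>s. 1 / H s)"
  have Hc: "continuous_on A H" using H by (simp add: Cfun_def)
  have "continuous_on A (\<lambda>s. 1 / H s)" using nz by (intro continuous_on_divide Hc continuous_on_const) auto
  then have K: "K \<in> Cfun A" unfolding K_def by (rule Cfun_as_el)
  have "(\<lambda>s. H s * K s) = as_el A (\<lambda>s. 1)"
    using nz H by (auto simp: K_def as_el_def fun_eq_iff Cfun_def)
  then have "\<psi> H t * \<psi> K t = 1"
    using sa_mult[OF sa H K] sa_one[OF sa] t by (metis as_el_def)
  then show ?thesis by auto
qed

lemma re_sq: "Re (z * cnj z) = (cmod z)^2"
  by (metis Re_complex_of_real complex_norm_square)

context setting begin

lemma uniq:
  assumes a: "graph_aut V E ends \<phi>" and sa: "star_aut S \<psi>"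
    and gen\<psi>: "\<forall>f\<in>oedges E. \<psi> (as_el S (wt_edge \<tau> f)) = as_el S (rg \<phi> (snd \<phi> f))"
    and F: "F \<in> Cfun S"
  shows "\<psi> F = Ps \<phi> F"
proof (rule ext)
  fix t
  show "\<psi> F t = Ps \<phi> F t"
  proof (cases "t \<in> S")
    case False
    then show ?thesis using Cfun_zero[OF sa_Cfun[OF sa F]] by (simp add: Ps_def as_el_def)
  next
    case t: True
    define p where "p = hm \<phi> t"
    have pS: "p \<in> S" unfolding p_def by (rule hm_S[OF t])
    define one where "one = as_el S (\<lambda>s. 1::complex)"
    have one: "one \<in> Cfun S" "\<psi> one t = 1" "\<And>s. s \<in> S \<Longrightarrow> one s = 1"
      using Cfun_one sa_one[OF sa] t by (auto simp: one_def as_el_def)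
    have lin: "\<psi> (\<lambda>s. X s + c * one s) t = \<psi> X t + c" if X: "X \<in> Cfun S" for X c
      using sa_add[OF sa X Cfun_scale[OF one(1)]] sa_scale[OF sa one(1)] one(2) by simp
    have linC: "(\<lambda>s. X s + c * one s) \<in> Cfun S" if X: "X \<in> Cfun S" for X c
      by (rule Cfun_add[OF X Cfun_scale[OF one(1)]])
    have sqC: "(\<lambda>s. X s * cnj (X s)) \<in> Cfun S" if X: "X \<in> Cfun S" for X
      by (rule Cfun_mult[OF X Cfun_cnj[OF X]])
    have sq: "\<psi> (\<lambda>s. X s * cnj (X s)) t = \<psi> X t * cnj (\<psi> X t)" if X: "X \<in> Cfun S" for X
      using sa_mult[OF sa X Cfun_cnj[OF X]] sa_cnj[OF sa X] by simp
    define Z where "Z e = as_el S (\<lambda>s. s e)" for e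
    have ZC: "Z e \<in> Cfun S" for e
      unfolding Z_def
      by (rule Cfun_as_el, rule continuous_on_subset[OF continuous_on_product_coordinates subset_UNIV])
    have Zv: "\<psi> (Z e) t = p e" if e: "e \<in> E - \<tau>" for e
    proof -
      have "Z e = as_el S (wt_edge \<tau> (e, True))" using e by (simp add: Z_def wt_edge_def as_el_def fun_eq_iff)
      moreover have "(e, True) \<in> oedges E" using e by (simp add: oedges_iff)
      ultimately have "\<psi> (Z e) = as_el S (rg \<phi> (snd \<phi> (e, True)))" using gen\<psi> by simp
      then show ?thesis using t e by (simp add: as_el_def p_def hm_def)
    qed
    define D where "D e = (\<lambda>s. Z e s + (- p e) * one s)" for e
    have DC: "D e \<in> Cfun S" for e unfolding D_def by (rule linC[OF ZC])
    have Dv: "\<psi> (D e) t = 0" if "e \<in> E - \<tau>" for e unfolding D_def using lin[OF ZC, of e "- p e"] Zv[OF that] by simp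
    define N where "N = (\<lambda>s. \<Sum>e\<in>E - \<tau>. D e s * cnj (D e s))"
    have finI: "finite (E - \<tau>)" using fg by (simp add: finite_graph_def)
    have NS: "N \<in> Cfun S \<and> \<psi> N t = (\<Sum>e\<in>E - \<tau>. \<psi> (\<lambda>s. D e s * cnj (D e s)) t)"
      unfolding N_def by (rule sa_sum[OF sa finI]) (simp add: sqC[OF DC])
    have Nv: "\<psi> N t = 0" using NS sq[OF DC] Dv by simp
    show ?thesis
    proof (rule ccontr)
      assume ne: "\<psi> F t \<noteq> Ps \<phi> F t"
      have PsF: "Ps \<phi> F t = F p" using t by (simp add: Ps_def as_el_def p_def)
      define c where "c = \<psi> F t"
      define G where "G = (\<lambda>s. F s + (- c) * one s)"
      have GC: "G \<in> Cfun S" unfolding G_def by (rule linC[OF F])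
      have Gv: "\<psi> G t = 0" unfolding G_def c_def using lin[OF F, of "- \<psi> F t"] by simp
      have Gp: "G p \<noteq> 0" using ne PsF one(3)[OF pS] by (simp add: G_def c_def)
      define H where "H = (\<lambda>s. G s * cnj (G s) + N s)"
      have HC: "H \<in> Cfun S" unfolding H_def by (rule Cfun_add[OF sqC[OF GC] conjunct1[OF NS]])
      have Hv: "\<psi> H t = 0" unfolding H_def
        using sa_add[OF sa sqC[OF GC] conjunct1[OF NS]] sq[OF GC] Gv Nv by simp
      have Hnz: "\<forall>s\<in>S. H s \<noteq> 0"
      proof
        fix s assume sS: "s \<in> S"
        show "H s \<noteq> 0"
        proof
          assume H0: "H s = 0"
          have "Re (H s) = (cmod (G s))^2 + (\<Sum>e\<in>E - \<tau>. (cmod (D e s))^2)"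
            by (simp only: H_def N_def Re_sum re_sq plus_complex.sel)
          then have R: "(cmod (G s))^2 + (\<Sum>e\<in>E - \<tau>. (cmod (D e s))^2) = 0" using H0 by simp
          have nn: "(\<Sum>e\<in>E - \<tau>. (cmod (D e s))^2) \<ge> 0" by (simp add: sum_nonneg)
          have g0: "(cmod (G s))^2 = 0" using R nn by (smt (verit) zero_le_power2)
          have d0: "(\<Sum>e\<in>E - \<tau>. (cmod (D e s))^2) = 0" using R g0 by simp
          have "\<forall>e\<in>E - \<tau>. (cmod (D e s))^2 = 0" using d0 finI by (subst (asm) sum_nonneg_eq_0_iff) auto
          then have "\<forall>e\<in>E - \<tau>. s e = p e"
            using sS by (auto simp: D_def Z_def as_el_def one(3))
          then have "s = p"
          proof -
            assume A: "\<forall>e\<in>E - \<tau>. s e = p e"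
            show "s = p"
            proof
              fix e show "s e = p e"
              proof (cases "e \<in> E - \<tau>")
                case True then show ?thesis using A by simp
              next
                case False
                have "s e = 1" "p e = 1" using sS pS False unfolding torus_def mem_Collect_eq by blast+
                then show ?thesis by simp
              qed
            qed
          qed
          then show False using g0 Gp by simp
        qed
      qed
      show False using char_nonzero[OF sa t HC Hnz] Hv by simp
    qed
  qed
qed

end


context setting begin

lemma commute:
  assumes a: "graph_aut V E ends \<phi>" and t: "t \<in> S" and fix_t: "hm \<phi> t = t"
  shows "mat_commute (length us) (regauge_matrix ends \<tau> us \<phi> t) (hamiltonian E ends \<tau> us t)"
  unfolding mat_commute_def
proof (intro allI impI)
  fix i j assume i: "i < length us" and j: "j < length us"
  let ?k = "length us"
  let ?u = "\<lambda>m. us ! m"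
  let ?r' = "fst \<phi> r"
  let ?P = "tree_path ends (Tp \<phi>)"
  define cc where "cc v = wt_walk \<tau> (?P ?r' v) t" for v
  let ?M = "regauge_matrix ends \<tau> us \<phi> t"
  let ?H = "hamiltonian E ends \<tau> us t"
  have uV: "?u m \<in> V" if "m < ?k" for m using that setus nth_mem by blast
  have r'V: "?r' \<in> V" using aut_V[OF a r_V] .
  have injV: "inj_on (fst \<phi>) V" using aut_bijV[OF a] by (rule bij_betw_imp_inj_on)
  have injE: "inj_on (snd \<phi>) (oedges E)" using aut_bijE[OF a] by (rule bij_betw_imp_inj_on)
  have imE: "snd \<phi> ` oedges E = oedges E" using aut_bijE[OF a] by (rule bij_betw_imp_surj_on)
  have imV: "fst \<phi> ` V = V" using aut_bijV[OF a] by (rule bij_betw_imp_surj_on)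
  have Mv: "?M l m = (if fst \<phi> (?u l) = ?u m then cnj (cc (?u m)) else 0)" if m: "m < ?k" for l m
  proof -
    have w1: "wt_walk \<tau> (tree_path ends \<tau> r ?r') t = 1"
      by (rule wt_walk_in_tree) (rule is_walk_edges[OF tp_walk(1)[OF st r_V r'V]])
    have w2: "wt_walk \<tau> (tree_path ends \<tau> (?u m) r) t = 1"
      by (rule wt_walk_in_tree) (rule is_walk_edges[OF tp_walk(1)[OF st uV[OF m] r_V]])
    show ?thesis unfolding regauge_matrix_def Let_def using w1 w2 by (simp add: cc_def)
  qed
  have dist_eq: "?u l = ?u m \<longleftrightarrow> l = m" if "l < ?k" "m < ?k" for l m
    using nth_eq_iff_index_eq[OF dist that] .
  have "fst \<phi> (?u i) \<in> set us" using aut_V[OF a uV[OF i]] setus by simp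
  then obtain aa where aa: "aa < ?k" "?u aa = fst \<phi> (?u i)" by (auto simp: in_set_conv_nth)
  have "?u j \<in> fst \<phi> ` V" using imV uV[OF j] by simp
  then obtain v where v: "v \<in> V" "fst \<phi> v = ?u j" by (rule imageE) auto
  have "v \<in> set us" using v(1) setus by simp
  then obtain bb where bb: "bb < ?k" "?u bb = v" by (auto simp: in_set_conv_nth)
  have bbj: "fst \<phi> (?u bb) = ?u j" using bb v by simp
  have L: "(\<Sum>l<?k. ?M i l * ?H l j) = cnj (cc (?u aa)) * ?H aa j"
  proof -
    have "(\<Sum>l<?k. ?M i l * ?H l j) = (\<Sum>l<?k. if l = aa then cnj (cc (?u aa)) * ?H aa j else 0)"
    proof (rule sum.cong[OF refl])
      fix l assume l: "l \<in> {..<?k}"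
      have "fst \<phi> (?u i) = ?u l \<longleftrightarrow> l = aa" using dist_eq[of aa l] aa l by auto
      then show "?M i l * ?H l j = (if l = aa then cnj (cc (?u aa)) * ?H aa j else 0)"
        using Mv[of l i] l by (simp add: Mv)
    qed
    also have "\<dots> = cnj (cc (?u aa)) * ?H aa j" using aa(1) by (simp add: sum.delta)
    finally show ?thesis .
  qed
  have R: "(\<Sum>l<?k. ?H i l * ?M l j) = ?H i bb * cnj (cc (?u j))"
  proof -
    have "(\<Sum>l<?k. ?H i l * ?M l j) = (\<Sum>l<?k. if l = bb then ?H i bb * cnj (cc (?u j)) else 0)"
    proof (rule sum.cong[OF refl])
      fix l assume l: "l \<in> {..<?k}"
      have "fst \<phi> (?u l) = ?u j \<longleftrightarrow> l = bb"
      proof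
        assume "fst \<phi> (?u l) = ?u j"
        then have "fst \<phi> (?u l) = fst \<phi> (?u bb)" using bbj by simp
        then have "?u l = ?u bb" using inj_onD[OF injV _ uV uV[OF bb(1)]] l by simp
        then show "l = bb" using dist_eq[of l bb] l bb(1) by simp
      qed (use bbj in simp)
      then show "?H i l * ?M l j = (if l = bb then ?H i bb * cnj (cc (?u j)) else 0)"
        using Mv[OF j, of l] by simp
    qed
    also have "\<dots> = ?H i bb * cnj (cc (?u j))" using bb(1) by (simp add: sum.delta)
    finally show ?thesis .
  qed
  define Gb where "Gb = {g \<in> oedges E. osrc ends g = ?u bb \<and> otgt ends g = ?u i}"
  define Fa where "Fa = {f \<in> oedges E. osrc ends f = ?u j \<and> otgt ends f = ?u aa}"
  have bij: "bij_betw (snd \<phi>) Gb Fa"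
  proof (rule bij_betw_imageI)
    show "inj_on (snd \<phi>) Gb" using injE by (rule inj_on_subset) (auto simp: Gb_def)
    show "snd \<phi> ` Gb = Fa"
    proof
      show "snd \<phi> ` Gb \<subseteq> Fa"
        using aut_E[OF a] aut_src[OF a] aut_tgt[OF a] bbj aa(2) by (auto simp: Gb_def Fa_def)
      show "Fa \<subseteq> snd \<phi> ` Gb"
      proof
        fix f assume f: "f \<in> Fa"
        then have fE: "f \<in> snd \<phi> ` oedges E" using imE by (simp add: Fa_def)
        then obtain g where g: "g \<in> oedges E" "f = snd \<phi> g" by (rule imageE) auto
        have "fst \<phi> (osrc ends g) = fst \<phi> (?u bb)" using aut_src[OF a g(1)] g f bbj by (simp add: Fa_def)
        then have s: "osrc ends g = ?u bb" by (rule inj_onD[OF injV _ fg_src[OF fg g(1)] uV[OF bb(1)]])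
        have "fst \<phi> (otgt ends g) = fst \<phi> (?u i)" using aut_tgt[OF a g(1)] g f aa(2) by (simp add: Fa_def)
        then have tt: "otgt ends g = ?u i" by (rule inj_onD[OF injV _ fg_tgt[OF fg g(1)] uV[OF i]])
        show "f \<in> snd \<phi> ` Gb" using g s tt by (auto simp: Gb_def)
      qed
    qed
  qed
  have Haj: "?H aa j = (\<Sum>g\<in>Gb. wt_edge \<tau> (snd \<phi> g) t)"
    unfolding hamiltonian_def Fa_def[symmetric] using sum.reindex_bij_betw[OF bij, of "\<lambda>f. wt_edge \<tau> f t"] by simp
  have Hib: "?H i bb = (\<Sum>g\<in>Gb. wt_edge \<tau> g t)"
    unfolding hamiltonian_def Gb_def by simp
  have trm: "cnj (cc (?u aa)) * wt_edge \<tau> (snd \<phi> g) t = wt_edge \<tau> g t * cnj (cc (?u j))" if g: "g \<in> Gb" for g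
  proof -
    have gE: "g \<in> oedges E" using g by (simp add: Gb_def)
    have src: "osrc ends (snd \<phi> g) = ?u j" using aut_src[OF a gE] g bbj by (simp add: Gb_def)
    have tgt: "otgt ends (snd \<phi> g) = ?u aa" using aut_tgt[OF a gE] g aa(2) by (simp add: Gb_def)
    have rv: "?P (?u aa) ?r' = rw (?P ?r' (?u aa))" by (rule tp_rev[OF Tp_st[OF a] r'V uV[OF aa(1)]])
    have "wt_edge \<tau> g t = wt_edge \<tau> g (hm \<phi> t)" using fix_t by simp
    also have "\<dots> = rg \<phi> (snd \<phi> g) t" by (rule gen[OF a gE t])
    also have "\<dots> = cc (?u j) * wt_edge \<tau> (snd \<phi> g) t * cnj (cc (?u aa))"
      unfolding rg_unfold src tgt rv by (simp add: cc_def wt_walk_rw mult.assoc)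
    finally have W: "wt_edge \<tau> g t = cc (?u j) * wt_edge \<tau> (snd \<phi> g) t * cnj (cc (?u aa))" .
    have U: "cc (?u j) * cnj (cc (?u j)) = 1" unfolding cc_def by (rule wt_walk_cnj[OF t])
    have "wt_edge \<tau> g t * cnj (cc (?u j)) = cc (?u j) * wt_edge \<tau> (snd \<phi> g) t * cnj (cc (?u aa)) * cnj (cc (?u j))"
      by (simp only: W)
    also have "\<dots> = (cc (?u j) * cnj (cc (?u j))) * (cnj (cc (?u aa)) * wt_edge \<tau> (snd \<phi> g) t)"
      by (simp only: mult_ac)
    also have "\<dots> = cnj (cc (?u aa)) * wt_edge \<tau> (snd \<phi> g) t" by (simp only: U mult_1)
    finally show ?thesis by simp
  qed
  have "cnj (cc (?u aa)) * ?H aa j = (\<Sum>g\<in>Gb. cnj (cc (?u aa)) * wt_edge \<tau> (snd \<phi> g) t)"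
    by (simp only: Haj sum_distrib_left)
  also have "\<dots> = (\<Sum>g\<in>Gb. wt_edge \<tau> g t * cnj (cc (?u j)))"
    by (rule sum.cong[OF refl]) (rule trm)
  also have "\<dots> = ?H i bb * cnj (cc (?u j))" by (simp only: Hib sum_distrib_right)
  finally have "cnj (cc (?u aa)) * ?H aa j = ?H i bb * cnj (cc (?u j))" .
  then show "(\<Sum>l<?k. ?M i l * ?H l j) = (\<Sum>l<?k. ?H i l * ?M l j)" by (simp only: L R)
qed

end


theorem mainTheorem4:
  fixes V :: "'v set" and E :: "'e set" and ends :: "'e \<Rightarrow> 'v \<times> 'v"
    and \<tau> :: "'e set" and us :: "'v list"
  assumes "connected_graph V E ends"
    and "spanning_tree V E ends \<tau>"
    and "distinct us" and "set us = V"
  shows "\<exists>\<Psi> h.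
    (\<forall>\<phi>. graph_aut V E ends \<phi> \<longrightarrow>
       star_aut (torus E \<tau>) (\<Psi> \<phi>) \<and>
       (\<forall>f\<in>oedges E. \<Psi> \<phi> (as_el (torus E \<tau>) (wt_edge \<tau> f))
                      = as_el (torus E \<tau>) (regauged_wt ends \<tau> (hd us) \<phi> (snd \<phi> f))) \<and>
       (\<forall>\<psi>. star_aut (torus E \<tau>) \<psi> \<and>
            (\<forall>f\<in>oedges E. \<psi> (as_el (torus E \<tau>) (wt_edge \<tau> f))
                           = as_el (torus E \<tau>) (regauged_wt ends \<tau> (hd us) \<phi> (snd \<phi> f)))
            \<longrightarrow> (\<forall>F\<in>Cfun (torus E \<tau>). \<psi> F = \<Psi> \<phi> F)) \<and>
       (\<exists>g. homeomorphism (torus E \<tau>) (torus E \<tau>) (h \<phi>) g) \<and>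
       (\<forall>F\<in>Cfun (torus E \<tau>). \<Psi> \<phi> F = as_el (torus E \<tau>) (F \<circ> h \<phi>)) \<and>
       (\<forall>t\<in>torus E \<tau>. h \<phi> t = t \<longrightarrow>
          mat_commute (length us) (regauge_matrix ends \<tau> us \<phi> t) (hamiltonian E ends \<tau> us t))) \<and>
    (\<forall>\<phi>1 \<phi>2. graph_aut V E ends \<phi>1 \<and> graph_aut V E ends \<phi>2 \<longrightarrow>
       (\<forall>F\<in>Cfun (torus E \<tau>). \<Psi> (aut_comp \<phi>1 \<phi>2) F = \<Psi> \<phi>1 (\<Psi> \<phi>2 F)))"
proof -
  interpret setting V E ends \<tau> us using assms by unfold_locales
  show ?thesis
  proof (intro exI[of _ Ps] exI[of _ hm] conjI allI impI)
    fix \<phi> assume a: "graph_aut V E ends \<phi>"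
    show "star_aut (torus E \<tau>) (Ps \<phi>)" by (rule Ps_star[OF a])
    show "\<forall>f\<in>oedges E. Ps \<phi> (as_el (torus E \<tau>) (wt_edge \<tau> f))
                      = as_el (torus E \<tau>) (regauged_wt ends \<tau> (hd us) \<phi> (snd \<phi> f))"
      using Ps_gen[OF a] by blast
    show "\<forall>F\<in>Cfun (torus E \<tau>). \<psi> F = Ps \<phi> F"
      if "star_aut (torus E \<tau>) \<psi> \<and>
            (\<forall>f\<in>oedges E. \<psi> (as_el (torus E \<tau>) (wt_edge \<tau> f))
                           = as_el (torus E \<tau>) (regauged_wt ends \<tau> (hd us) \<phi> (snd \<phi> f)))" for \<psi>
      using uniq[OF a] that by blast
    show "\<exists>g. homeomorphism (torus E \<tau>) (torus E \<tau>) (hm \<phi>) g" using homeo[OF a] by blast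
    show "\<forall>F\<in>Cfun (torus E \<tau>). Ps \<phi> F = as_el (torus E \<tau>) (F \<circ> hm \<phi>)" by (simp add: Ps_def)
    show "\<forall>t\<in>torus E \<tau>. hm \<phi> t = t \<longrightarrow>
          mat_commute (length us) (regauge_matrix ends \<tau> us \<phi> t) (hamiltonian E ends \<tau> us t)"
      using commute[OF a] by blast
  next
    fix \<phi>1 \<phi>2 assume "graph_aut V E ends \<phi>1 \<and> graph_aut V E ends \<phi>2"
    then show "\<forall>F\<in>Cfun (torus E \<tau>). Ps (aut_comp \<phi>1 \<phi>2) F = Ps \<phi>1 (Ps \<phi>2 F)"
      using Ps_comp by blast
  qed
qed

end
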